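(* The minimal typing algorithm of System $\mathsf{F_{<:}^{K\top}}$ terminates on every $\mathsf{F_{<:}^\top}$ term-in-context $\Theta\vdash^\top t$.
   Context: System $\mathsf{F_{<:}^{K\top}}$: raw types $T ::= \top \mid X \mid T\to T \mid \forall^{\mathsf K}(X<:T).T \mid \forall^\top(X<:T).T$, up to $\alpha$-conversion. Contexts $\Theta$: finite sequences of $X<:T$ or $x:T$ with distinct variables, each type well-formed over the preceding part. Raw terms $t ::= \mathsf{top}\mid x\mid\lambda(x:T).t\mid\Lambda(X<:T).t\mid t\,t\mid t\{T\}$. Algorithmic subtyping $\Theta\vdash_A S<:T$: (1) $\Theta\vdash_A T<:\top$; (2) $\Theta\vdash_A X<:X$; (3) if $T\not\equiv\top,X$ and $\Theta,X<:S,\Theta'\vdash_A S<:T$ then $\Theta,X<:S,\Theta'\vdash_A X<:T$; (4) from $S'<:S$, $T<:T'$ infer $S\to T<:S'\to T'$; (5) from $\Theta,X<:S\vdash_A T<:T'$ infer $\forall^{\mathsf K}(X<:S).T<:\forall^{\mathsf K}(X<:S).T'$; (6) from $\Theta\vdash_A T_0<:S_0$, $\Theta,X<:S_0\vdash_A S_1<:T_1$ infer $\forall^{\mathsf K}(X<:S_0).S_1<:\forall^\top(X<:T_0).T_1$; (7) from $\Theta\vdash_A T_0<:S_0$, $\Theta,X<:\top\vdash_A S_1<:T_1$ infer $\forall^\top(X<:S_0).S_1<:\forall^\top(X<:T_0).T_1$. The subtyping algorithm is the deterministic goal-directed search for such derivations (at most one rule applies to each judgement). $\Theta^*(T)=\Theta^*(S)$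 if $T\equiv X$ and $X<:S$ occurs in $\Theta$; $\Theta^*(T)=T$ otherwise. Minimal typing $\Theta\vdash_M t:T$: $\Theta,x:T,\Theta'\vdash_M x:T$; $\Theta\vdash_M\mathsf{top}:\top$; from $\Theta,x:S\vdash_M t:T$ infer $\Theta\vdash_M\lambda(x:S).t:S\to T$; from $\Theta\vdash_M r:R$, $\Theta\vdash_M s:S$, $\Theta\vdash S<:S'$ with $\Theta^*(R)=S'\to T$ infer $\Theta\vdash_M r\,s:T$; from $\Theta,X<:S\vdash_M t:T$ infer $\Theta\vdash_M\Lambda(X<:S).t:\forall^{\mathsf K}(X<:S).T$; from $\Theta\vdash_M r:R$, $\Theta\vdash S<:S'$ with $\Theta^*(R)=\forall^{\mathsf K}(X<:S').T$ or $\forall^\top(X<:S').T$ infer $\Theta\vdash_M r\{S\}:T[S/X]$. The minimal typing algorithm computes, by recursion on the structure of $t$, the unique $T$ with $\Theta\vdash_M t:T$ or rejects, deciding each subtyping premise $\Theta\vdash S<:S'$ by running the subtyping algorithm on $\Theta\vdash_A S<:S'$. An $\mathsf{F_{<:}^\top}$ term-in-context is one whose context and type annotations contain only $\forall^\top$ quantifiers. *)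

theory Defs
  imports Main
begin

text \<open>Types up to alpha-conversion are represented with de Bruijn indices.
  Type variables are indexed among the type bindings of the context only
  (index 0 = most recently bound type variable); term variables are indexed
  among the term bindings only.  AllK S T is the kernel quantifier
  forall^K (X<:S).T, AllT S T is the full quantifier forall^top (X<:S).T;
  in both, T lives under one extra type binder.\<close>

datatype ty = Top | TVar nat | Arr ty ty | AllK ty ty | AllT ty ty

datatype tm = TopT | Var nat | Lam ty tm | TLam ty tm | App tm tm | TApp tm ty

text \<open>Context entries, newest first: TB S is X<:S, VB T is x:T.\<close>
datatype bind = TB ty | VB ty

fun shift :: "nat \<Rightarrow> nat \<Rightarrow> ty \<Rightarrow> ty" where
  "shift d c Top = Top"
| "shift d c (TVar k) = (if k < c then TVar k else TVar (k + d))"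
| "shift d c (Arr A B) = Arr (shift d c A) (shift d c B)"
| "shift d c (AllK A B) = AllK (shift d c A) (shift d (Suc c) B)"
| "shift d c (AllT A B) = AllT (shift d c A) (shift d (Suc c) B)"

text \<open>inst j U T: substitute U (a type over the context outside the j binders)
  for the variable with index j in T, decrementing higher indices.
  T[S/X] for the outermost bound X is inst 0 S T.\<close>
fun inst :: "nat \<Rightarrow> ty \<Rightarrow> ty \<Rightarrow> ty" where
  "inst j U Top = Top"
| "inst j U (TVar k) = (if k < j then TVar k else if k = j then shift j 0 U else TVar (k - 1))"
| "inst j U (Arr A B) = Arr (inst j U A) (inst j U B)"
| "inst j U (AllK A B) = AllK (inst j U A) (inst (Suc j) U B)"
| "inst j U (AllT A B) = AllT (inst j U A) (inst (Suc j) U B)"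

fun wf_ty :: "nat \<Rightarrow> ty \<Rightarrow> bool" where
  "wf_ty n Top = True"
| "wf_ty n (TVar k) = (k < n)"
| "wf_ty n (Arr A B) = (wf_ty n A \<and> wf_ty n B)"
| "wf_ty n (AllK A B) = (wf_ty n A \<and> wf_ty (Suc n) B)"
| "wf_ty n (AllT A B) = (wf_ty n A \<and> wf_ty (Suc n) B)"

fun tyctx :: "bind list \<Rightarrow> ty list" where
  "tyctx [] = []"
| "tyctx (TB S # \<Theta>) = S # tyctx \<Theta>"
| "tyctx (VB T # \<Theta>) = tyctx \<Theta>"

fun wf_ctx :: "bind list \<Rightarrow> bool" where
  "wf_ctx [] = True"
| "wf_ctx (TB S # \<Theta>) = (wf_ctx \<Theta> \<and> wf_ty (length (tyctx \<Theta>)) S)"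
| "wf_ctx (VB T # \<Theta>) = (wf_ctx \<Theta> \<and> wf_ty (length (tyctx \<Theta>)) T)"

text \<open>Type of term variable j, expressed over the whole context.\<close>
fun lookup :: "bind list \<Rightarrow> nat \<Rightarrow> ty option" where
  "lookup [] j = None"
| "lookup (TB S # \<Theta>) j = map_option (shift 1 0) (lookup \<Theta> j)"
| "lookup (VB T # \<Theta>) 0 = Some T"
| "lookup (VB T # \<Theta>) (Suc j) = lookup \<Theta> j"

function expose :: "ty list \<Rightarrow> ty \<Rightarrow> ty" where
  "expose \<Gamma> (TVar k) =
     (if k < length \<Gamma> then shift (Suc k) 0 (expose (drop (Suc k) \<Gamma>) (\<Gamma> ! k)) else TVar k)"
| "expose \<Gamma> Top = Top"
| "expose \<Gamma> (Arr A B) = Arr A B"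
| "expose \<Gamma> (AllK A B) = AllK A B"
| "expose \<Gamma> (AllT A B) = AllT A B"
  by pat_completeness auto
termination by (relation "measure (\<lambda>(\<Gamma>, _). length \<Gamma>)") auto

text \<open>sub_prems \<Gamma> S T = None if no rule of the algorithmic system applies to
  the judgement \<Gamma> |-A S <: T; otherwise Some ps with ps the premises (in order)
  of the unique applicable rule (1)-(7).\<close>
definition sub_prems :: "ty list \<Rightarrow> ty \<Rightarrow> ty \<Rightarrow> (ty list \<times> ty \<times> ty) list option" where
  "sub_prems \<Gamma> S T =
    (if T = Top then Some []
     else (case S of
        TVar k \<Rightarrow>
          (if T = TVar k then Some []
           else if k < length \<Gamma> then Some [(\<Gamma>, shift (Suc k) 0 (\<Gamma> ! k), T)]
           else None)
      | Arr S1 S2 \<Rightarrow> (case T of Arr T1 T2 \<Rightarrow> Some [(\<Gamma>, T1, S1), (\<Gamma>, S2, T2)] | _ \<Rightarrow> None)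
      | AllK S0 S1 \<Rightarrow>
          (case T of
             AllK T0 T1 \<Rightarrow> (if S0 = T0 then Some [(S0 # \<Gamma>, S1, T1)] else None)
           | AllT T0 T1 \<Rightarrow> Some [(\<Gamma>, T0, S0), (S0 # \<Gamma>, S1, T1)]
           | _ \<Rightarrow> None)
      | AllT S0 S1 \<Rightarrow>
          (case T of AllT T0 T1 \<Rightarrow> Some [(\<Gamma>, T0, S0), (Top # \<Gamma>, S1, T1)] | _ \<Rightarrow> None)
      | Top \<Rightarrow> None))"

inductive sub :: "ty list \<times> ty \<times> ty \<Rightarrow> bool" where
  "sub_prems \<Gamma> S T = Some ps \<Longrightarrow> list_all sub ps \<Longrightarrow> sub (\<Gamma>, S, T)"

text \<open>Termination of the deterministic goal-directed search: it stops (rejecting)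
  if no rule applies; otherwise it runs the premises in order, stopping at
  the first failing one.\<close>
inductive sub_halts :: "ty list \<times> ty \<times> ty \<Rightarrow> bool" where
  "sub_prems \<Gamma> S T = None \<Longrightarrow> sub_halts (\<Gamma>, S, T)"
| "sub_prems \<Gamma> S T = Some ps \<Longrightarrow>
     (\<forall>i < length ps. (\<forall>j < i. sub (ps ! j)) \<longrightarrow> sub_halts (ps ! i)) \<Longrightarrow>
     sub_halts (\<Gamma>, S, T)"

inductive mtype :: "bind list \<Rightarrow> tm \<Rightarrow> ty \<Rightarrow> bool" where
  mt_var: "lookup \<Theta> j = Some T \<Longrightarrow> mtype \<Theta> (Var j) T"
| mt_top: "mtype \<Theta> TopT Top"
| mt_lam: "mtype (VB S # \<Theta>) t T \<Longrightarrow> mtype \<Theta> (Lam S t) (Arr S T)"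
| mt_app: "mtype \<Theta> r R \<Longrightarrow> mtype \<Theta> s S \<Longrightarrow> sub (tyctx \<Theta>, S, S') \<Longrightarrow>
           expose (tyctx \<Theta>) R = Arr S' T \<Longrightarrow> mtype \<Theta> (App r s) T"
| mt_tlam: "mtype (TB S # \<Theta>) t T \<Longrightarrow> mtype \<Theta> (TLam S t) (AllK S T)"
| mt_tapp: "mtype \<Theta> r R \<Longrightarrow> sub (tyctx \<Theta>, S, S') \<Longrightarrow>
           expose (tyctx \<Theta>) R = AllK S' T \<or> expose (tyctx \<Theta>) R = AllT S' T \<Longrightarrow>
           mtype \<Theta> (TApp r S) (inst 0 S T)"

text \<open>Subtyping query issued by the algorithm at an application / type application
  node, given the computed types of the subterms (None: no query, reject).\<close>
definition app_query :: "bind list \<Rightarrow> ty \<Rightarrow> ty \<Rightarrow> (ty list \<times> ty \<times> ty) option" where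
  "app_query \<Theta> R S = (case expose (tyctx \<Theta>) R of
      Arr S' T \<Rightarrow> Some (tyctx \<Theta>, S, S') | _ \<Rightarrow> None)"

definition tapp_query :: "bind list \<Rightarrow> ty \<Rightarrow> ty \<Rightarrow> (ty list \<times> ty \<times> ty) option" where
  "tapp_query \<Theta> R S = (case expose (tyctx \<Theta>) R of
      AllK S' T \<Rightarrow> Some (tyctx \<Theta>, S, S')
    | AllT S' T \<Rightarrow> Some (tyctx \<Theta>, S, S')
    | _ \<Rightarrow> None)"

inductive typing_halts :: "bind list \<Rightarrow> tm \<Rightarrow> bool" where
  "typing_halts \<Theta> TopT"
| "typing_halts \<Theta> (Var j)"
| "typing_halts (VB S # \<Theta>) t \<Longrightarrow> typing_halts \<Theta> (Lam S t)"
| "typing_halts (TB S # \<Theta>) t \<Longrightarrow> typing_halts \<Theta> (TLam S t)"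
| "typing_halts \<Theta> r \<Longrightarrow> typing_halts \<Theta> s \<Longrightarrow>
   (\<forall>R S q. mtype \<Theta> r R \<longrightarrow> mtype \<Theta> s S \<longrightarrow> app_query \<Theta> R S = Some q \<longrightarrow> sub_halts q) \<Longrightarrow>
   typing_halts \<Theta> (App r s)"
| "typing_halts \<Theta> r \<Longrightarrow>
   (\<forall>R q. mtype \<Theta> r R \<longrightarrow> tapp_query \<Theta> R S = Some q \<longrightarrow> sub_halts q) \<Longrightarrow>
   typing_halts \<Theta> (TApp r S)"

fun no_K :: "ty \<Rightarrow> bool" where
  "no_K Top = True"
| "no_K (TVar k) = True"
| "no_K (Arr A B) = (no_K A \<and> no_K B)"
| "no_K (AllK A B) = False"
| "no_K (AllT A B) = (no_K A \<and> no_K B)"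

fun bind_ty :: "bind \<Rightarrow> ty" where
  "bind_ty (TB S) = S" | "bind_ty (VB T) = T"

definition ctx_top :: "bind list \<Rightarrow> bool" where
  "ctx_top \<Theta> = (\<forall>b \<in> set \<Theta>. no_K (bind_ty b))"

fun tm_top :: "tm \<Rightarrow> bool" where
  "tm_top TopT = True"
| "tm_top (Var j) = True"
| "tm_top (Lam S t) = (no_K S \<and> tm_top t)"
| "tm_top (TLam S t) = (no_K S \<and> tm_top t)"
| "tm_top (App r s) = (tm_top r \<and> tm_top s)"
| "tm_top (TApp r S) = (no_K S \<and> tm_top r)"

fun wf_tm :: "bind list \<Rightarrow> tm \<Rightarrow> bool" where
  "wf_tm \<Theta> TopT = True"
| "wf_tm \<Theta> (Var j) = (lookup \<Theta> j \<noteq> None)"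
| "wf_tm \<Theta> (Lam S t) = (wf_ty (length (tyctx \<Theta>)) S \<and> wf_tm (VB S # \<Theta>) t)"
| "wf_tm \<Theta> (TLam S t) = (wf_ty (length (tyctx \<Theta>)) S \<and> wf_tm (TB S # \<Theta>) t)"
| "wf_tm \<Theta> (App r s) = (wf_tm \<Theta> r \<and> wf_tm \<Theta> s)"
| "wf_tm \<Theta> (TApp r S) = (wf_tm \<Theta> r \<and> wf_ty (length (tyctx \<Theta>)) S)"

end

theory Submission
  imports Defs
begin

fun wt :: "nat list \<Rightarrow> ty \<Rightarrow> nat" where
  "wt e Top = 1"
| "wt e (TVar k) = (if k < length e then Suc (e!k) else 1)"
| "wt e (Arr A B) = Suc (wt e A + wt e B)"
| "wt e (AllK A B) = Suc (wt e A + wt (wt e A # e) B)"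
| "wt e (AllT A B) = Suc (wt e A + wt (1 # e) B)"

fun ws :: "ty list \<Rightarrow> nat list" where
  "ws [] = []"
| "ws (A # G) = wt (ws G) A # ws G"

lemma wt_pos: "wt e T > 0"
  by (cases T) auto

lemma wt_shift: "wt (e1 @ e2 @ e3) (shift (length e2) (length e1) T) = wt (e1 @ e3) T"
proof (induction T arbitrary: e1)
  case (AllK A B)
  then show ?case using AllK.IH(2)[of "wt (e1 @ e3) A # e1"] by simp
next
  case (AllT A B)
  then show ?case using AllT.IH(2)[of "1 # e1"] by simp
qed (auto simp: nth_append)

lemma length_ws[simp]: "length (ws G) = length G"
  by (induction G) auto

lemma drop_ws: "drop n (ws G) = ws (drop n G)"
  by (induction G arbitrary: n) (auto simp: drop_Cons split: nat.splits)

lemma nth_ws: "k < length G \<Longrightarrow> ws G ! k = wt (ws (drop (Suc k) G)) (G ! k)"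
  by (induction G arbitrary: k) (auto simp: nth_Cons split: nat.splits)

lemma wt_shift_bound:
  assumes "k < length G"
  shows "wt (ws G) (shift (Suc k) 0 (G ! k)) = ws G ! k"
proof -
  have e: "ws G = [] @ take (Suc k) (ws G) @ drop (Suc k) (ws G)" by simp
  have l: "length (take (Suc k) (ws G)) = Suc k" using assms by simp
  have "wt (ws G) (shift (Suc k) 0 (G ! k)) = wt ([] @ drop (Suc k) (ws G)) (G ! k)"
    using wt_shift[of "[]" "take (Suc k) (ws G)" "drop (Suc k) (ws G)" "G ! k"] e l
    by (metis list.size(3))
  also have "\<dots> = ws G ! k" using nth_ws[OF assms] by (simp add: drop_ws)
  finally show ?thesis .
qed

lemma noK_shift: "no_K T \<Longrightarrow> no_K (shift d c T)"
  by (induction T arbitrary: c) auto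

lemma sub_halts_intro:
  assumes "\<And>ps. sub_prems G S T = Some ps \<Longrightarrow> \<forall>p\<in>set ps. sub_halts p"
  shows "sub_halts (G, S, T)"
proof (cases "sub_prems G S T")
  case None
  then show ?thesis by (rule sub_halts.intros(1))
next
  case (Some ps)
  then show ?thesis using assms[OF Some]
    by (intro sub_halts.intros(2)) auto
qed

lemma subA:
  "wt (ws G) S + wt (ws G) T < n \<Longrightarrow> list_all no_K G \<Longrightarrow> no_K S \<Longrightarrow> no_K T
   \<Longrightarrow> sub_halts (G, S, T)"
proof (induction n arbitrary: G S T)
  case 0
  then show ?case by simp
next
  case (Suc n)
  show ?case
  proof (rule sub_halts_intro)
    fix ps assume ps: "sub_prems G S T = Some ps"
    show "\<forall>p\<in>set ps. sub_halts p"
    proof (cases "T = Top")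
      case True
      then show ?thesis using ps by (simp add: sub_prems_def)
    next
      case nT: False
      show ?thesis
      proof (cases S)
        case Top
        then show ?thesis using ps nT by (simp add: sub_prems_def)
      next
        case (TVar k)
        show ?thesis
        proof (cases "T = TVar k")
          case True
          then show ?thesis using ps nT TVar by (simp add: sub_prems_def)
        next
          case False
          then have k: "k < length G" and pse: "ps = [(G, shift (Suc k) 0 (G ! k), T)]"
            using ps nT TVar by (auto simp: sub_prems_def split: if_splits)
          have "no_K (G ! k)" using Suc.prems(2) k by (simp add: list_all_length)
          moreover have "wt (ws G) (shift (Suc k) 0 (G ! k)) + wt (ws G) T < n"
            using Suc.prems(1) TVar k by (simp add: wt_shift_bound)
          ultimately show ?thesis using pse Suc.IH Suc.prems noK_shift by auto
        qed
      next
        case (Arr S1 S2)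
        then obtain T1 T2 where T: "T = Arr T1 T2" using ps nT
          by (auto simp: sub_prems_def split: ty.splits)
        then have "ps = [(G, T1, S1), (G, S2, T2)]" using ps Arr by (simp add: sub_prems_def)
        then show ?thesis using Suc.IH Suc.prems Arr T by auto
      next
        case (AllK S0 S1)
        then show ?thesis using Suc.prems by simp
      next
        case (AllT S0 S1)
        then obtain T0 T1 where T: "T = AllT T0 T1" using ps nT
          by (auto simp: sub_prems_def split: ty.splits)
        then have pse: "ps = [(G, T0, S0), (Top # G, S1, T1)]" using ps AllT by (simp add: sub_prems_def)
        have a: "sub_halts (G, T0, S0)" using Suc.IH Suc.prems AllT T by auto
        have "sub_halts (Top # G, S1, T1)"
          by (rule Suc.IH) (use Suc.prems AllT T in auto)
        then show ?thesis using a pse by auto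
      qed
    qed
  qed
qed

lemma subA': "list_all no_K G \<Longrightarrow> no_K S \<Longrightarrow> no_K T \<Longrightarrow> sub_halts (G, S, T)"
  using subA by blast

fun pos :: "ty \<Rightarrow> bool" where
  "pos Top = True"
| "pos (TVar k) = True"
| "pos (Arr A B) = (no_K A \<and> pos B)"
| "pos (AllK A B) = (no_K A \<and> pos B)"
| "pos (AllT A B) = (no_K A \<and> no_K B)"

lemma noK_pos: "no_K T \<Longrightarrow> pos T"
  by (induction T) auto

lemma subB: "list_all no_K G \<Longrightarrow> pos S \<Longrightarrow> no_K T \<Longrightarrow> sub_halts (G, S, T)"
proof (induction S arbitrary: G T)
  case Top
  then show ?case by (intro sub_halts_intro) (auto simp: sub_prems_def split: if_splits)
next
  case (TVar k)
  then show ?case by (intro subA') auto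
next
  case (AllT S0 S1)
  then show ?case by (intro subA') auto
next
  case (Arr S1 S2)
  show ?case
  proof (rule sub_halts_intro)
    fix ps assume ps: "sub_prems G (Arr S1 S2) T = Some ps"
    show "\<forall>p\<in>set ps. sub_halts p"
    proof (cases "T = Top")
      case True then show ?thesis using ps by (simp add: sub_prems_def)
    next
      case False
      then obtain T1 T2 where T: "T = Arr T1 T2" using ps
        by (auto simp: sub_prems_def split: ty.splits)
      then have "ps = [(G, T1, S1), (G, S2, T2)]" using ps by (simp add: sub_prems_def)
      then show ?thesis using Arr subA' T by auto
    qed
  qed
next
  case (AllK S0 S1)
  show ?case
  proof (rule sub_halts_intro)
    fix ps assume ps: "sub_prems G (AllK S0 S1) T = Some ps"
    show "\<forall>p\<in>set ps. sub_halts p"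
    proof (cases "T = Top")
      case True then show ?thesis using ps by (simp add: sub_prems_def)
    next
      case False
      then obtain T0 T1 where T: "T = AllT T0 T1" using ps AllK.prems
        by (auto simp: sub_prems_def split: ty.splits)
      then have pse: "ps = [(G, T0, S0), (S0 # G, S1, T1)]" using ps by (simp add: sub_prems_def)
      have "sub_halts (S0 # G, S1, T1)" using AllK T by auto
      then show ?thesis using pse AllK subA' T by auto
    qed
  qed
qed

lemma ctx_tyctx: "ctx_top Th \<Longrightarrow> list_all no_K (tyctx Th)"
  by (induction Th rule: tyctx.induct) (auto simp: ctx_top_def)

lemma lookup_noK: "ctx_top Th \<Longrightarrow> lookup Th j = Some T \<Longrightarrow> no_K T"
  by (induction Th j arbitrary: T rule: lookup.induct) (auto simp: ctx_top_def noK_shift)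

lemma expose_noK: "list_all no_K G \<Longrightarrow> no_K T \<Longrightarrow> no_K (expose G T)"
proof (induction G T rule: expose.induct)
  case (1 G k)
  then show ?case
    by (auto simp: noK_shift list_all_length list_all_iff set_drop_subset[THEN subsetD]
        intro!: noK_shift dest: in_set_dropD)
qed auto

lemma expose_pos: "list_all no_K G \<Longrightarrow> pos T \<Longrightarrow> pos (expose G T)"
  by (cases T) (auto intro!: noK_pos noK_shift expose_noK simp: list_all_length
      list_all_iff dest: in_set_dropD)

lemma noK_inst: "no_K U \<Longrightarrow> no_K T \<Longrightarrow> no_K (inst j U T)"
  by (induction T arbitrary: j) (auto intro: noK_shift)

lemma pos_inst: "no_K U \<Longrightarrow> pos T \<Longrightarrow> pos (inst j U T)"
  by (induction T arbitrary: j) (auto intro: noK_shift noK_inst noK_pos)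

lemma mtype_pos: "mtype Th t R \<Longrightarrow> ctx_top Th \<Longrightarrow> tm_top t \<Longrightarrow> pos R"
proof (induction rule: mtype.induct)
  case (mt_var Th j T)
  then show ?case using lookup_noK noK_pos by blast
next
  case (mt_lam S Th t T)
  then show ?case by (simp add: ctx_top_def)
next
  case (mt_tlam S Th t T)
  then show ?case by (simp add: ctx_top_def)
next
  case (mt_app Th r R s S S' T)
  then have "pos R" by simp
  then have "pos (expose (tyctx Th) R)" using expose_pos ctx_tyctx mt_app.prems by simp
  then show ?case using mt_app by simp
next
  case (mt_tapp Th r R S S' T)
  then have "pos (expose (tyctx Th) R)" using expose_pos ctx_tyctx by simp
  then show ?case using mt_tapp by (auto intro: pos_inst noK_pos[OF noK_inst])
qed auto

theorem proposition8p4: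
  assumes "wf_ctx \<Theta>" and "ctx_top \<Theta>" and "wf_tm \<Theta> t" and "tm_top t"
  shows "typing_halts \<Theta> t"
  using assms(2,4)
proof (induction t arbitrary: \<Theta>)
  case TopT
  show ?case by (rule typing_halts.intros(1))
next
  case (Var x)
  show ?case by (rule typing_halts.intros(2))
next
  case (Lam S t)
  then show ?case by (intro typing_halts.intros) (auto simp: ctx_top_def)
next
  case (TLam S t)
  then show ?case by (intro typing_halts.intros) (auto simp: ctx_top_def)
next
  case (App r s)
  have q: "sub_halts q" if h1: "mtype \<Theta> r R" and h2: "mtype \<Theta> s S" and h3: "app_query \<Theta> R S = Some q" for R S q
  proof -
    have pR: "pos (expose (tyctx \<Theta>) R)"
      using mtype_pos[OF h1] App.prems expose_pos ctx_tyctx by simp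
    have pS: "pos S" using mtype_pos[OF h2] App.prems by simp
    obtain S' T where e: "expose (tyctx \<Theta>) R = Arr S' T" and qe: "q = (tyctx \<Theta>, S, S')"
      using h3 by (auto simp: app_query_def split: ty.splits)
    show ?thesis using subB[OF ctx_tyctx[OF App.prems(1)] pS] pR e qe by simp
  qed
  show ?case using App q by (intro typing_halts.intros) auto
next
  case (TApp r S)
  have q: "sub_halts q" if h1: "mtype \<Theta> r R" and h2: "tapp_query \<Theta> R S = Some q" for R q
  proof -
    have pR: "pos (expose (tyctx \<Theta>) R)"
      using mtype_pos[OF h1] TApp.prems expose_pos ctx_tyctx by simp
    obtain S' where e: "no_K S'" and qe: "q = (tyctx \<Theta>, S, S')"
      using h2 pR by (auto simp: tapp_query_def split: ty.splits)
    show ?thesis using subA'[OF ctx_tyctx[OF TApp.prems(1)]] e qe TApp.prems by simp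
  qed
  show ?case using TApp q by (intro typing_halts.intros) auto
qed

end
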